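(* For all complex $x,y$, $$\sum_{n=0}^{\infty}R_n(y)\frac{x^n}{n!}=e^{y}\int_0^{y}e^{-t}I_0(2\sqrt{xt})\,dt=e^{y}\sum_{n=0}^{\infty}(-1)^nL_n(x)\frac{y^{n+1}}{(n+1)!}.$$
   Context: For an integer $n\ge 0$ and complex $y$, $R_n(y)=e^y-1-\frac{y}{1!}-\frac{y^2}{2!}-\dots-\frac{y^n}{n!}=e^y-\sum_{k=0}^n\frac{y^k}{k!}$. $I_0(2\sqrt{z})=\sum_{n\ge0}\frac{z^n}{(n!)^2}$ (an entire function of $z$). $L_n(x)=\sum_{k=0}^{n}\binom{n}{k}\frac{(-1)^kx^k}{k!}$ are the Laguerre polynomials. The integral is along the segment from $0$ to $y$. *)

theory Defs
  imports "HOL-Complex_Analysis.Complex_Analysis"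
begin

definition expRem :: "nat \<Rightarrow> complex \<Rightarrow> complex" where
  "expRem n y = exp y - (\<Sum>k\<le>n. y ^ k / fact k)"

text \<open>The entire function z \<mapsto> I_0(2 sqrt z) = sum_n z^n/(n!)^2.\<close>
definition besselI0sq :: "complex \<Rightarrow> complex" where
  "besselI0sq z = (\<Sum>n. z ^ n / (fact n)^2)"

definition laguerre :: "nat \<Rightarrow> complex \<Rightarrow> complex" where
  "laguerre n x = (\<Sum>k\<le>n. of_nat (n choose k) * (-1) ^ k * x ^ k / fact k)"

end

theory Submission
  imports Defs
begin


lemma series_contour_integral_linepath:
  fixes f :: "nat \<Rightarrow> complex \<Rightarrow> complex"
  assumes bnd: "\<And>n t. t \<in> closed_segment 0 y \<Longrightarrow> norm (f n t) \<le> M n" and M: "summable M"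
    and cont: "\<And>n. continuous_on (closed_segment 0 y) (f n)"
    and I: "\<And>n. (f n has_contour_integral I n) (linepath 0 y)"
  shows "(\<lambda>t. \<Sum>n. f n t) contour_integrable_on linepath 0 y
       \<and> I sums contour_integral (linepath 0 y) (\<lambda>t. \<Sum>n. f n t)"
proof -
  have u: "uniform_limit (path_image (linepath 0 y)) (\<lambda>n x. \<Sum>i<n. f i x) (\<lambda>x. \<Sum>i. f i x) sequentially"
    by (rule Weierstrass_m_test[OF _ M]) (use bnd in auto)
  have c: "continuous_on (path_image (linepath 0 y)) (\<lambda>x. \<Sum>i<n. f i x)" for n
    using cont by (auto intro!: continuous_on_sum)
  obtain I' J where I': "\<And>n. ((\<lambda>x. \<Sum>i<n. f i x) has_contour_integral I' n) (linepath 0 y)"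
    and J: "((\<lambda>x. \<Sum>i. f i x) has_contour_integral J) (linepath 0 y)" and lim: "(I' \<longlonglongrightarrow> J)"
    by (rule uniform_limit_contour_integral_linepath[OF u c]) auto
  have "((\<lambda>x. \<Sum>i<n. f i x) has_contour_integral (\<Sum>i<n. I i)) (linepath 0 y)" for n
    using I by (intro has_contour_integral_sum) auto
  hence "I' = (\<lambda>n. \<Sum>i<n. I i)" using I' has_contour_integral_unique by blast
  hence "I sums J" using lim unfolding sums_def by simp
  thus ?thesis using J contour_integral_unique contour_integrable_on_def by metis
qed



lemma deriv_E:
  "((\<lambda>t::complex. exp (-t) * (\<Sum>k\<le>n. t^k / fact k)) has_field_derivative
     (- exp (-z) * z^n / fact n)) (at z)"
proof (induction n)
  case 0
  then show ?case by (auto intro!: derivative_eq_intros)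
next
  case (Suc n)
  have eq: "(\<lambda>t::complex. exp (-t) * (\<Sum>k\<le>Suc n. t^k / fact k)) =
     (\<lambda>t. exp (-t) * (\<Sum>k\<le>n. t^k / fact k) + exp (-t) * t^Suc n / fact (Suc n))"
    by (auto simp: algebra_simps)
  have d0: "((\<lambda>t::complex. exp (-t) * t^Suc n) has_field_derivative
     (- exp (-z) * z^Suc n + exp (-z) * (of_nat (Suc n) * z^n))) (at z)"
    using DERIV_mult[OF DERIV_exp[THEN DERIV_chain2, OF DERIV_minus[OF DERIV_ident]] DERIV_power[OF DERIV_ident, where n="Suc n" and x=z and s=UNIV]]
    by (simp add: algebra_simps)
  have d: "((\<lambda>t::complex. exp (-t) * t^Suc n / fact (Suc n)) has_field_derivative
     ((- exp (-z) * z^Suc n + exp (-z) * (of_nat (Suc n) * z^n)) / fact (Suc n))) (at z)"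
    using DERIV_cdivide[OF d0] by simp
  have "- exp (-z) * z^n / fact n + (- exp (-z) * z^Suc n + exp (-z) * (of_nat (Suc n) * z^n)) / fact (Suc n)
       = - exp (-z) * z^Suc n / fact (Suc n)"
    by (simp add: fact_Suc divide_simps del: of_nat_Suc)
  then show ?case unfolding eq using DERIV_add[OF Suc d] by simp
qed

lemma int_exp_pow:
  "((\<lambda>t. exp (-t) * t^n) has_contour_integral (fact n * exp (-y) * expRem n y)) (linepath 0 y)"
proof -
  have "((\<lambda>t. - fact n * (exp (-t) * (\<Sum>k\<le>n. t^k / fact k))) has_field_derivative exp (-z) * z^n) (at z within UNIV)" for z :: complex
      using DERIV_cmult[OF deriv_E[of n z], of "- fact n"] by simp
  from contour_integral_primitive[of UNIV, OF this, of "linepath 0 y"]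
  have "((\<lambda>t. exp (-t) * t^n) has_contour_integral
      ((- fact n * (exp (-y) * (\<Sum>k\<le>n. y^k / fact k))) - (- fact n * (exp (-0) * (\<Sum>k\<le>n. (0::complex)^k / fact k)))))
      (linepath 0 y)" by simp
  moreover have "(\<Sum>k\<le>n. (0::complex)^k / fact k) = 1"
    by (induction n) auto
  moreover have "(- fact n * (exp (-y) * (\<Sum>k\<le>n. y^k / fact k))) + fact n = fact n * exp (-y) * expRem n y"
    by (simp add: expRem_def algebra_simps exp_minus field_simps)
  ultimately show ?thesis by simp
qed

lemma int_pow:
  "((\<lambda>t. a * t^n) has_contour_integral (a * y^Suc n / of_nat (Suc n))) (linepath 0 y)"
proof -
  have "((\<lambda>t. a * t^Suc n / of_nat (Suc n)) has_field_derivative a * z^n) (at z within UNIV)" for z :: complex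
    using DERIV_cdivide[OF DERIV_cmult[OF DERIV_power[OF DERIV_ident, where n="Suc n" and x=z and s=UNIV], of a], of "of_nat (Suc n)"]
    by (simp add: field_simps del: of_nat_Suc)
  from contour_integral_primitive[of UNIV, OF this, of "linepath 0 y"]
  show ?thesis by simp
qed



lemma summable_norm_fact: "summable (\<lambda>n. norm ((z::complex)^n / fact n))"
proof -
  have "summable (\<lambda>n. inverse (fact n) * norm z ^ n)" by (rule summable_exp)
  thus ?thesis by (simp add: norm_divide norm_power divide_inverse mult.commute norm_mult norm_inverse)
qed

lemma summable_norm_fact2: "summable (\<lambda>n. norm ((z::complex)^n / (fact n)^2))"
proof (rule summable_comparison_test'[OF summable_norm_fact])
  fix n :: nat
  have "(fact n :: real) \<le> (fact n)^2" by (simp add: power2_eq_square)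
  hence "norm z ^ n / (fact n)^2 \<le> norm z ^ n / fact n"
    by (intro divide_left_mono) auto
  thus "norm (norm ((z::complex)^n / (fact n)^2)) \<le> norm (z^n / fact n)"
    by (simp add: norm_divide norm_power)
qed

lemma exp_sums_c: "(\<lambda>k. (z::complex)^k / fact k) sums exp z"
  using exp_converges[of z] by (simp add: scaleR_conv_of_real divide_inverse mult.commute)

lemma seg_norm: "t \<in> closed_segment 0 y \<Longrightarrow> norm t \<le> norm (y::complex)"
  proof -
  assume "t \<in> closed_segment 0 y"
  then obtain u where "0 \<le> u" "u \<le> 1" "t = u *\<^sub>R y" by (auto simp: in_segment)
  thus ?thesis using mult_right_mono[of u 1 "cmod y"] by auto
qed

lemma aux: "(F::complex) \<noteq> 0 \<Longrightarrow> G \<noteq> 0 \<Longrightarrow> H \<noteq> 0 \<Longrightarrow>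
   A / F * (T * U) * (F / (H * G) * B * X / H) = (A * B) * T / G * (X * U / H^2)"
  by (simp add: field_simps power2_eq_square)

lemma cauchy_term:
  fixes x t :: complex
  shows "(\<Sum>i\<le>m. (-t)^i / fact i * ((x*t)^(m-i) / (fact (m-i))^2))
       = (-1)^m * laguerre m x / fact m * t^m"
proof -
  have "laguerre m x = (\<Sum>i\<le>m. of_nat (m choose (m-i)) * (-1) ^ (m-i) * x ^ (m-i) / fact (m-i))"
    unfolding laguerre_def atLeast0AtMost[symmetric]
    by (subst sum.atLeastAtMost_rev) simp
  hence "(-1)^m * laguerre m x / fact m * t^m =
     (\<Sum>i\<le>m. (-1)^m / fact m * t^m * (of_nat (m choose (m-i)) * (-1) ^ (m-i) * x ^ (m-i) / fact (m-i)))"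
    unfolding sum_distrib_left[symmetric] by simp
  also have "\<dots> = (\<Sum>i\<le>m. (-t)^i / fact i * ((x*t)^(m-i) / (fact (m-i))^2))"
  proof (rule sum.cong[OF refl])
    fix i assume "i \<in> {..m}"
    then obtain j where m: "m = i + j" by (metis atMost_iff le_add_diff_inverse)
    have b: "(of_nat ((i+j) choose j) :: complex) = fact (i+j) / (fact j * fact i)"
      using binomial_fact[of j "i+j"] by simp
    have b': "fact i * (fact j * (of_nat ((i+j) choose j) :: complex)) = fact (i+j)"
      unfolding b by simp
    have s: "(-1::complex)^(i+j) * (-1)^j = (-1)^i"
    proof -
      have "(-1::complex)^(i+j) * (-1)^j = (-1)^i * ((-1)*(-1))^j"
        by (simp only: power_add power_mult_distrib mult_ac)
      thus ?thesis by simp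
    qed
    have mi: "m - i = j" using m by simp
    show "(-1)^m / fact m * t^m * (of_nat (m choose (m-i)) * (-1) ^ (m-i) * x ^ (m-i) / fact (m-i))
        = (-t)^i / fact i * ((x*t)^(m-i) / (fact (m-i))^2)"
      unfolding mi unfolding m b power_add[of t i j] power_minus[of t i] power_mult_distrib s[symmetric]
      by (rule aux) auto
  qed
  finally show ?thesis by (rule sym)
qed


lemma bnd:
  fixes x y t :: complex
  assumes h1: "norm (exp (-t)) \<le> exp (norm y)" and h2: "norm t ^ n \<le> norm y ^ n"
  shows "norm (x^n / (fact n)^2 * (exp (-t) * t^n)) \<le> exp (norm y) * norm ((x*y)^n / (fact n)^2)"
proof -
  have "norm (exp (-t)) * norm t^n \<le> exp (norm y) * norm y^n"
    by (rule mult_mono[OF h1 h2]) auto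
  hence "norm x^n / (fact n)^2 * (norm (exp (-t)) * norm t^n) \<le> norm x^n / (fact n)^2 * (exp (norm y) * norm y^n)"
    by (rule mult_left_mono) auto
  thus ?thesis by (simp add: norm_mult norm_divide norm_power power_mult_distrib mult_ac)
qed


theorem mainTheorem16:
  fixes x y :: complex
  shows "(\<lambda>t. exp (- t) * besselI0sq (x * t)) contour_integrable_on linepath 0 y
    \<and> (\<lambda>n. expRem n y * x ^ n / fact n) sums
        (exp y * contour_integral (linepath 0 y) (\<lambda>t. exp (- t) * besselI0sq (x * t)))
    \<and> (\<lambda>n. (-1) ^ n * laguerre n x * y ^ (n + 1) / fact (n + 1)) sums
        contour_integral (linepath 0 y) (\<lambda>t. exp (- t) * besselI0sq (x * t))"
proof -
  define f where "f = (\<lambda>t. exp (- t) * besselI0sq (x * t))"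
  define g where "g = (\<lambda>n t. x^n / (fact n)^2 * (exp (-t) * t^n))"
  have fg: "f = (\<lambda>t. \<Sum>n. g n t)"
  proof
    fix t
    have "summable (\<lambda>n. (x*t)^n / (fact n)^2)"
      by (rule summable_norm_cancel[OF summable_norm_fact2])
    hence "exp (-t) * (\<Sum>n. (x*t)^n / (fact n)^2) = (\<Sum>n. exp (-t) * ((x*t)^n / (fact n)^2))"
      by (rule suminf_mult[symmetric])
    moreover have "(\<lambda>n. g n t) = (\<lambda>n. exp (-t) * ((x*t)^n / (fact n)^2))"
      by (rule ext) (simp add: g_def power_mult_distrib)
    ultimately show "f t = (\<Sum>n. g n t)"
      by (simp only: f_def besselI0sq_def)
  qed
  have A: "(\<lambda>t. \<Sum>n. g n t) contour_integrable_on linepath 0 y \<and>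
     (\<lambda>n. x^n / (fact n)^2 * (fact n * exp (-y) * expRem n y)) sums contour_integral (linepath 0 y) (\<lambda>t. \<Sum>n. g n t)"
  proof (rule series_contour_integral_linepath)
    fix n t assume t: "t \<in> closed_segment 0 y"
    have "norm (exp (-t)) \<le> exp (norm y)"
    proof -
      have "- Re t \<le> norm y" using abs_Re_le_cmod[of t] seg_norm[OF t] by linarith
      thus ?thesis by (simp add: norm_exp_eq_Re)
    qed
    moreover have "norm t ^ n \<le> norm y ^ n" using seg_norm[OF t] by (simp add: power_mono)
    ultimately show "norm (g n t) \<le> exp (norm y) * norm ((x*y)^n / (fact n)^2)"
      unfolding g_def by (rule bnd)
  next
    show "summable (\<lambda>n. exp (norm y) * norm ((x*y)^n / (fact n)^2))"
      by (rule summable_mult[OF summable_norm_fact2])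
  next
    show "continuous_on (closed_segment 0 y) (g n)" for n
      unfolding g_def by (intro continuous_intros)
  next
    show "(g n has_contour_integral x^n / (fact n)^2 * (fact n * exp (-y) * expRem n y)) (linepath 0 y)" for n
      unfolding g_def by (rule has_contour_integral_lmul[OF int_exp_pow])
  qed
  define a where "a = (\<lambda>m. (-1)^m * laguerre m x / fact m)"
  have as: "(\<lambda>m. a m * t^m) sums f t" for t
  proof -
    have "(\<lambda>m. \<Sum>i\<le>m. (-t)^i / fact i * ((x*t)^(m-i) / (fact (m-i))^2)) sums
          ((\<Sum>k. (-t)^k / fact k) * (\<Sum>k. (x*t)^k / (fact k)^2))"
      by (rule Cauchy_product_sums[OF summable_norm_fact summable_norm_fact2])
    moreover have "(\<Sum>k. (-t)^k / fact k) = exp (-t)" by (rule sums_unique[OF exp_sums_c, symmetric])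
    moreover have "(\<lambda>m. a m * t^m) = (\<lambda>m. \<Sum>i\<le>m. (-t)^i / fact i * ((x*t)^(m-i) / (fact (m-i))^2))"
      by (simp only: a_def cauchy_term)
    moreover have "f t = exp (-t) * (\<Sum>k. (x*t)^k / (fact k)^2)"
      by (simp only: f_def besselI0sq_def)
    ultimately show ?thesis by (simp only:)
  qed
  have fa: "f = (\<lambda>t. \<Sum>m. a m * t^m)"
    by (intro ext) (rule sums_unique[OF as])
  have B: "(\<lambda>t. \<Sum>m. a m * t^m) contour_integrable_on linepath 0 y \<and>
     (\<lambda>m. a m * y^Suc m / of_nat (Suc m)) sums contour_integral (linepath 0 y) (\<lambda>t. \<Sum>m. a m * t^m)"
  proof (rule series_contour_integral_linepath)
    fix n t assume t: "t \<in> closed_segment 0 y"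
    show "norm (a n * t^n) \<le> norm (a n) * norm y ^ n"
      using seg_norm[OF t] by (simp add: norm_mult norm_power power_mono mult_left_mono)
  next
    have "summable (\<lambda>m. a m * (of_real (norm y + 1))^m)" by (rule sums_summable[OF as])
    moreover have "norm y < norm (complex_of_real (norm y + 1))" by simp
    ultimately have "summable (\<lambda>m. norm (a m * y^m))" by (rule powser_insidea)
    thus "summable (\<lambda>m. norm (a m) * norm y ^ m)" by (simp add: norm_mult norm_power)
  next
    show "continuous_on (closed_segment 0 y) (\<lambda>t. a n * t^n)" for n
      by (intro continuous_intros)
  next
    show "((\<lambda>t. a n * t^n) has_contour_integral a n * y^Suc n / of_nat (Suc n)) (linepath 0 y)" for n
      by (rule int_pow)
  qed
  have e1: "exp y * (x^n / (fact n)^2 * (fact n * exp (-y) * expRem n y)) = expRem n y * x ^ n / fact n" for n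
    by (simp add: exp_minus field_simps power2_eq_square)
  have e2: "a m * y^Suc m / of_nat (Suc m) = (-1) ^ m * laguerre m x * y ^ (m + 1) / fact (m + 1)" for m
    by (simp add: a_def fact_Suc field_simps del: of_nat_Suc)
  from A have A1: "f contour_integrable_on linepath 0 y"
    and A2: "(\<lambda>n. x^n / (fact n)^2 * (fact n * exp (-y) * expRem n y)) sums contour_integral (linepath 0 y) f"
    by (simp_all only: fg[symmetric])
  from B have B2: "(\<lambda>m. a m * y^Suc m / of_nat (Suc m)) sums contour_integral (linepath 0 y) f"
    by (simp only: fa[symmetric])
  have C2: "(\<lambda>n. expRem n y * x ^ n / fact n) sums (exp y * contour_integral (linepath 0 y) f)"
    using sums_mult[OF A2, of "exp y"] by (simp only: e1)
  have C3: "(\<lambda>n. (-1) ^ n * laguerre n x * y ^ (n + 1) / fact (n + 1)) sums contour_integral (linepath 0 y) f"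
    using B2 by (simp only: e2)
  show ?thesis using A1 C2 C3 unfolding f_def by blast
qed


end
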